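(* Every path-connected almost totally disconnected compact space is a Corson compact, i.e. is homeomorphic to a subspace of $\Sigma[0,1]^\Gamma$ for some set $\Gamma$.
   Context: For a set $\Gamma$, $\Sigma[0,1]^\Gamma$ is the subspace of $[0,1]^\Gamma$ (product topology) of points with countable support (i.e. $x_\gamma\neq0$ for only countably many $\gamma$), and $\Sigma_0^1[0,1]^\Gamma$ is the subspace of $[0,1]^\Gamma$ consisting of those $x$ with $x_\gamma\in\{0,1\}$ for all but countably many $\gamma$. A compact space is almost totally disconnected if it is homeomorphic to a subspace of $\Sigma_0^1[0,1]^\Gamma$ for some set $\Gamma$. *)

theory Defs
  imports "HOL-Analysis.Analysis"
begin

text \<open>The cube [0,1]^Gamma with the product topology (points are extensional
  functions on Gamma, as in the library's product_topology).\<close>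
definition cube_top :: "'i set \<Rightarrow> ('i \<Rightarrow> real) topology" where
  "cube_top \<Gamma> = product_topology (\<lambda>_. top_of_set {0..1::real}) \<Gamma>"

definition Sigma_cube :: "'i set \<Rightarrow> ('i \<Rightarrow> real) set" where
  "Sigma_cube \<Gamma> = {x \<in> topspace (cube_top \<Gamma>). countable {\<gamma>\<in>\<Gamma>. x \<gamma> \<noteq> 0}}"

definition Sigma01_cube :: "'i set \<Rightarrow> ('i \<Rightarrow> real) set" where
  "Sigma01_cube \<Gamma> = {x \<in> topspace (cube_top \<Gamma>). countable {\<gamma>\<in>\<Gamma>. x \<gamma> \<notin> {0,1}}}"

text \<open>The index set Gamma is taken in the type 'a set (subsets of points of X), which is
  large enough to index a base of X, so no generality is lost.\<close>
definition corson_compact :: "'a topology \<Rightarrow> bool" where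
  "corson_compact X \<longleftrightarrow> compact_space X \<and>
     (\<exists>(\<Gamma>::'a set set) A. A \<subseteq> Sigma_cube \<Gamma> \<and>
        X homeomorphic_space subtopology (cube_top \<Gamma>) A)"

end

theory Submission imports Defs begin

lemma rat_cross:
  fixes f :: "real \<Rightarrow> real"
  assumes cf: "continuous_on {0..1} f" and f0: "f 0 \<in> {0,1}" and f1: "f 1 \<in> {0,1}" and ne: "f 0 \<noteq> f 1"
  shows "\<exists>r\<in>\<rat>. r \<in> {0..1} \<and> 0 < f r \<and> f r < 1"
proof -
  have "\<exists>t\<in>{0..1}. f t = 1/2"
  proof (cases "f 0 = 0")
    case True
    then have "f 1 = 1" using f1 ne by auto
    then show ?thesis using IVT'[of f 0 "1/2" 1] cf True by auto
  next
    case False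
    then have "f 0 = 1" "f 1 = 0" using f0 f1 ne by auto
    then show ?thesis using IVT2'[of f 1 "1/2" 0] cf by auto
  qed
  then obtain t where t: "t \<in> {0..1}" "f t = 1/2" by blast
  from cf t(1) obtain d where d: "d > 0" "\<forall>s\<in>{0..1}. dist s t < d \<longrightarrow> dist (f s) (f t) < 1/2"
    unfolding continuous_on_iff by (meson half_gt_zero_iff zero_less_one)
  have "max 0 (t - d) < min 1 (t + d)" using t d by auto
  then obtain r where r: "r \<in> \<rat>" "max 0 (t - d) < r" "r < min 1 (t + d)" using Rats_dense_in_real by blast
  then have "r \<in> {0..1}" "dist r t < d" by (auto simp: dist_real_def)
  with d r t have "dist (f r) (1/2) < 1/2" by auto
  then have "0 < f r \<and> f r < 1" unfolding dist_real_def by linarith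
  then show ?thesis using r \<open>r \<in> {0..1}\<close> by blast
qed


lemma diff_countable:
  fixes X :: "'a topology" and c :: "'b \<Rightarrow> 'a \<Rightarrow> real"
  assumes pc: "path_connected_space X"
  and cont: "\<And>\<gamma>. \<gamma>\<in>\<Gamma> \<Longrightarrow> continuous_map X euclideanreal (c \<gamma>)"
  and cnt: "\<And>x. x\<in>topspace X \<Longrightarrow> countable {\<gamma>\<in>\<Gamma>. c \<gamma> x \<notin> {0,1}}"
  and x: "x \<in> topspace X" and a: "a \<in> topspace X"
  shows "countable {\<gamma>\<in>\<Gamma>. c \<gamma> x \<noteq> c \<gamma> a}"
proof -
  obtain p where p: "pathin X p" "p 0 = a" "p 1 = x"
    using pc x a unfolding path_connected_space_def by blast
  have pin: "p r \<in> topspace X" if "r \<in> {0..1}" for r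
  proof -
    have "p ` topspace (top_of_set {0..1}) \<subseteq> topspace X" using p(1) unfolding pathin_def
      by (rule continuous_map_image_subset_topspace)
    then show ?thesis using that by auto
  qed
  have S: "{\<gamma>\<in>\<Gamma>. c \<gamma> x \<noteq> c \<gamma> a} \<subseteq> {\<gamma>\<in>\<Gamma>. c \<gamma> x \<notin> {0,1}} \<union> {\<gamma>\<in>\<Gamma>. c \<gamma> a \<notin> {0,1}}
      \<union> (\<Union>r\<in>\<rat>\<inter>{0..1}. {\<gamma>\<in>\<Gamma>. c \<gamma> (p r) \<notin> {0,1}})"
  proof
    fix \<gamma> assume g: "\<gamma> \<in> {\<gamma>\<in>\<Gamma>. c \<gamma> x \<noteq> c \<gamma> a}"
    show "\<gamma> \<in> {\<gamma>\<in>\<Gamma>. c \<gamma> x \<notin> {0,1}} \<union> {\<gamma>\<in>\<Gamma>. c \<gamma> a \<notin> {0,1}}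
      \<union> (\<Union>r\<in>\<rat>\<inter>{0..1}. {\<gamma>\<in>\<Gamma>. c \<gamma> (p r) \<notin> {0,1}})"
    proof (cases "c \<gamma> x \<in> {0,1} \<and> c \<gamma> a \<in> {0,1}")
      case True
      have "continuous_map (top_of_set {0..1}) euclideanreal (c \<gamma> \<circ> p)"
        using p(1) cont[of \<gamma>] g unfolding pathin_def by (intro continuous_map_compose[of _ X]) auto
      then have co: "continuous_on {0..1} (c \<gamma> \<circ> p)" by simp
      have h0: "(c \<gamma> \<circ> p) 0 \<in> {0,1}" "(c \<gamma> \<circ> p) 1 \<in> {0,1}" "(c \<gamma> \<circ> p) 0 \<noteq> (c \<gamma> \<circ> p) 1"
        using True g p(2,3) by auto
      from rat_cross[OF co h0] obtain r where r: "r\<in>\<rat>" "r \<in> {0..1}" "0 < (c \<gamma> \<circ> p) r" "(c \<gamma> \<circ> p) r < 1"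
        by blast
      have "\<gamma> \<in> {\<gamma>\<in>\<Gamma>. c \<gamma> (p r) \<notin> {0,1}}" using r g by auto
      then show ?thesis using r by blast
    next
      case False
      then show ?thesis using g by auto
    qed
  qed
  show ?thesis
    apply (rule countable_subset[OF S])
    apply (intro countable_Un countable_UN)
    using cnt x a pin countable_rat by (auto intro: countable_Int1)
qed


lemma maxsep: "(u::real) \<noteq> v \<Longrightarrow> max 0 (u - a) \<noteq> max 0 (v - a) \<or> max 0 (a - u) \<noteq> max 0 (a - v)"
  by (simp add: max_def)

lemma corson_from_coords:
  fixes X :: "'a topology" and c :: "'b \<Rightarrow> 'a \<Rightarrow> real"
  assumes comp: "compact_space X" and pc: "path_connected_space X"
  and cont: "\<And>\<gamma>. \<gamma>\<in>\<Gamma> \<Longrightarrow> continuous_map X euclideanreal (c \<gamma>)"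
  and rng: "\<And>\<gamma> x. \<gamma>\<in>\<Gamma> \<Longrightarrow> x\<in>topspace X \<Longrightarrow> c \<gamma> x \<in> {0..1}"
  and cnt: "\<And>x. x\<in>topspace X \<Longrightarrow> countable {\<gamma>\<in>\<Gamma>. c \<gamma> x \<notin> {0,1}}"
  and sep: "\<And>x y. x\<in>topspace X \<Longrightarrow> y\<in>topspace X \<Longrightarrow> x\<noteq>y \<Longrightarrow> \<exists>\<gamma>\<in>\<Gamma>. c \<gamma> x \<noteq> c \<gamma> y"
  shows "corson_compact X"
proof -
  define a0 where "a0 = (SOME x. x \<in> topspace X)"
  define \<phi> :: "'b \<times> bool \<Rightarrow> 'a \<Rightarrow> real" where
    "\<phi> k x = max 0 (if snd k then c (fst k) x - c (fst k) a0 else c (fst k) a0 - c (fst k) x)" for k x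
  define K :: "('b \<times> bool) set" where "K = \<Gamma> \<times> UNIV"
  define Q :: "real set" where "Q = {q\<in>\<rat>. 0 \<le> q}"
  define mk where "mk = (\<lambda>(k,q). {x\<in>topspace X. q < \<phi> k x})"
  define G where "G = mk ` (K \<times> Q)"
  define sel where "sel U = (SOME kq. kq \<in> K \<times> Q \<and> U = mk kq)" for U
  define g where "g U x = max 0 (\<phi> (fst (sel U)) x - snd (sel U))" for U x
  define e where "e x = restrict (\<lambda>U. g U x) G" for x
  have selG: "sel U \<in> K \<times> Q" "U = mk (sel U)" if "U \<in> G" for U
  proof -
    have "\<exists>kq. kq \<in> K \<times> Q \<and> U = mk kq" using that unfolding G_def by blast
    then have "sel U \<in> K \<times> Q \<and> U = mk (sel U)" unfolding sel_def by (rule someI_ex)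
    then show "sel U \<in> K \<times> Q" "U = mk (sel U)" by auto
  qed
  have contphi: "continuous_map X euclideanreal (\<phi> k)" if "k \<in> K" for k
  proof (cases "snd k")
    case True
    then have "\<phi> k = (\<lambda>x. max 0 (c (fst k) x - c (fst k) a0))" by (auto simp: \<phi>_def fun_eq_iff)
    then show ?thesis using cont[of "fst k"] that unfolding K_def
      by (auto intro!: continuous_map_real_max continuous_map_diff)
  next
    case False
    then have "\<phi> k = (\<lambda>x. max 0 (c (fst k) a0 - c (fst k) x))" by (auto simp: \<phi>_def fun_eq_iff)
    then show ?thesis using cont[of "fst k"] that unfolding K_def
      by (auto intro!: continuous_map_real_max continuous_map_diff)
  qed
  have phi_rng: "0 \<le> \<phi> k x \<and> \<phi> k x \<le> 1" if "k \<in> K" "x \<in> topspace X" for k x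
  proof -
    have a0: "a0 \<in> topspace X" using that(2) unfolding a0_def by (metis someI_ex)
    have "c (fst k) x \<in> {0..1}" "c (fst k) a0 \<in> {0..1}" using rng that a0 unfolding K_def by auto
    then show ?thesis unfolding \<phi>_def by auto
  qed
  have gpos: "0 < g U x \<longleftrightarrow> x \<in> U" if "U \<in> G" "x \<in> topspace X" for U x
  proof -
    obtain k q where kq: "sel U = (k,q)" by fastforce
    have "U = {x\<in>topspace X. q < \<phi> k x}" using selG[OF that(1)] kq unfolding mk_def by auto
    then show ?thesis unfolding g_def kq using that(2) by auto
  qed
  have g_rng: "g U x \<in> {0..1}" if "U \<in> G" "x \<in> topspace X" for U x
  proof -
    obtain k q where kq: "sel U = (k,q)" by fastforce
    have "k \<in> K" "q \<ge> 0" using selG(1)[OF that(1)] kq unfolding Q_def by auto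
    then show ?thesis unfolding g_def kq using phi_rng[of k x] that(2) by auto
  qed
  have contg: "continuous_map X euclideanreal (g U)" if "U \<in> G" for U
  proof -
    obtain k q where kq: "sel U = (k,q)" by fastforce
    have "k \<in> K" using selG(1)[OF that(1)] kq by auto
    then have "continuous_map X euclideanreal (\<lambda>x. max 0 (\<phi> k x - q))"
      using contphi[of k] by (intro continuous_map_real_max continuous_map_diff) auto
    moreover have "g U = (\<lambda>x. max 0 (\<phi> k x - q))" unfolding g_def kq by (simp add: fun_eq_iff)
    ultimately show ?thesis by simp
  qed
  have conte: "continuous_map X (cube_top G) e"
    unfolding cube_top_def continuous_map_componentwise
  proof (intro conjI ballI)
    show "e ` topspace X \<subseteq> extensional G" unfolding e_def by auto
    fix U assume U: "U \<in> G"
    have "(\<lambda>x. e x U) = g U" using U unfolding e_def by (simp add: fun_eq_iff)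
    then show "continuous_map X (top_of_set {0..1}) (\<lambda>x. e x U)"
      using contg[OF U] g_rng[OF U] by (simp add: continuous_map_in_subtopology Pi_iff)
  qed
  have haus: "Hausdorff_space (cube_top G)"
    unfolding cube_top_def Hausdorff_space_product_topology
    by (simp add: Hausdorff_space_subtopology)
  have inj: "inj_on e (topspace X)"
  proof (rule inj_onI, rule ccontr)
    fix x y assume x: "x \<in> topspace X" and y: "y \<in> topspace X" and exy: "e x = e y" and ne: "x \<noteq> y"
    have key: False if x: "x \<in> topspace X" and y: "y \<in> topspace X" and exy: "e x = e y"
      and k: "k \<in> K" "\<phi> k x < \<phi> k y" for x y k
    proof -
      obtain q where q: "q \<in> \<rat>" "\<phi> k x < q" "q < \<phi> k y" using Rats_dense_in_real k(2) by blast
      have "q \<in> Q" using q phi_rng[OF k(1) x] unfolding Q_def by auto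
      define U where "U = mk (k,q)"
      have UG: "U \<in> G" unfolding U_def G_def using k(1) \<open>q \<in> Q\<close> by auto
      have "y \<in> U" "x \<notin> U" using q x y unfolding U_def mk_def by auto
      then have "0 < g U y" "\<not> 0 < g U x" using gpos[OF UG] x y by auto
      moreover have "e x U = g U x" "e y U = g U y" using UG unfolding e_def by auto
      ultimately show False using exy by auto
    qed
    obtain \<gamma> where g: "\<gamma> \<in> \<Gamma>" "c \<gamma> x \<noteq> c \<gamma> y" using sep[OF x y ne] by blast
    have "\<phi> (\<gamma>,True) x \<noteq> \<phi> (\<gamma>,True) y \<or> \<phi> (\<gamma>,False) x \<noteq> \<phi> (\<gamma>,False) y"
      unfolding \<phi>_def using maxsep[OF g(2), of "c \<gamma> a0"] by simp
    then have "\<exists>k\<in>K. \<phi> k x \<noteq> \<phi> k y" using g(1) unfolding K_def by blast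
    then obtain k where k: "k \<in> K" "\<phi> k x \<noteq> \<phi> k y" by blast
    show False
    proof (cases "\<phi> k x < \<phi> k y")
      case True
      then show ?thesis using key[OF x y exy k(1)] by blast
    next
      case False
      then have "\<phi> k y < \<phi> k x" using k(2) by linarith
      then show ?thesis using key[OF y x exy[symmetric] k(1)] by blast
    qed
  qed
  have emb: "embedding_map X (cube_top G) e"
    by (rule continuous_imp_embedding_map[OF conte comp haus inj])
  have sub: "e ` topspace X \<subseteq> Sigma_cube G"
  proof
    fix z assume "z \<in> e ` topspace X"
    then obtain x where x: "x \<in> topspace X" and z: "z = e x" by blast
    have a0: "a0 \<in> topspace X" using x unfolding a0_def by (metis someI_ex)
    have ztop: "z \<in> topspace (cube_top G)"
      using continuous_map_image_subset_topspace[OF conte] x z by auto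
    have c1: "countable {\<gamma>\<in>\<Gamma>. c \<gamma> x \<noteq> c \<gamma> a0}"
      by (rule diff_countable[OF pc cont cnt x a0])
    have "{k\<in>K. \<phi> k x \<noteq> 0} \<subseteq> {\<gamma>\<in>\<Gamma>. c \<gamma> x \<noteq> c \<gamma> a0} \<times> UNIV"
      unfolding K_def \<phi>_def by (auto split: if_splits)
    then have c2: "countable {k\<in>K. \<phi> k x \<noteq> 0}"
      by (rule countable_subset) (use c1 in \<open>auto intro: countable_SIGMA\<close>)
    have c3: "countable Q" unfolding Q_def using countable_rat by (auto intro: countable_subset)
    have "{U\<in>G. z U \<noteq> 0} \<subseteq> mk ` ({k\<in>K. \<phi> k x \<noteq> 0} \<times> Q)"
    proof
      fix U assume U: "U \<in> {U\<in>G. z U \<noteq> 0}"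
      then have UG: "U \<in> G" and "g U x \<noteq> 0" using z unfolding e_def by auto
      then have "0 < g U x" using g_rng[OF UG x] by auto
      obtain k q where kq: "sel U = (k,q)" by fastforce
      have kQ: "k \<in> K" "q \<in> Q" using selG(1)[OF UG] kq by auto
      have "q < \<phi> k x" using \<open>0 < g U x\<close> unfolding g_def kq by auto
      then have "\<phi> k x \<noteq> 0" using kQ unfolding Q_def by auto
      then have "(k,q) \<in> {k\<in>K. \<phi> k x \<noteq> 0} \<times> Q" using kQ by auto
      moreover have "U = mk (k,q)" using selG(2)[OF UG] kq by simp
      ultimately show "U \<in> mk ` ({k\<in>K. \<phi> k x \<noteq> 0} \<times> Q)" by blast
    qed
    then have "countable {U\<in>G. z U \<noteq> 0}"
      by (rule countable_subset) (use c2 c3 in \<open>auto intro: countable_SIGMA\<close>)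
    then show "z \<in> Sigma_cube G" unfolding Sigma_cube_def using ztop by auto
  qed
  show ?thesis
    unfolding corson_compact_def
    using comp sub embedding_map_imp_homeomorphic_space[OF emb] by blast
qed

theorem proposition1:
  fixes X :: "'a topology" and \<Gamma> :: "'b set" and A :: "('b \<Rightarrow> real) set"
  assumes "compact_space X"
    and "path_connected_space X"
    and "A \<subseteq> Sigma01_cube \<Gamma>"
    and "X homeomorphic_space subtopology (cube_top \<Gamma>) A"
  shows "corson_compact X"
proof -
  obtain h where h: "homeomorphic_map X (subtopology (cube_top \<Gamma>) A) h"
    using assms(4) unfolding homeomorphic_space by blast
  have ch: "continuous_map X (cube_top \<Gamma>) h" and hA: "h \<in> topspace X \<rightarrow> A"
    using homeomorphic_imp_continuous_map[OF h] by (auto simp: continuous_map_in_subtopology)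
  have hin: "inj_on h (topspace X)" by (rule homeomorphic_imp_injective_map[OF h])
  have htop: "h x \<in> (\<Pi>\<^sub>E i\<in>\<Gamma>. {0..1})" if "x \<in> topspace X" for x
    using continuous_map_image_subset_topspace[OF ch] that unfolding cube_top_def by auto
  show ?thesis
  proof (rule corson_from_coords[where c = "\<lambda>\<gamma> x. h x \<gamma>" and \<Gamma> = \<Gamma>])
    show "compact_space X" "path_connected_space X" using assms by auto
    fix \<gamma> assume g: "\<gamma> \<in> \<Gamma>"
    have "continuous_map X (top_of_set {0..1}) (\<lambda>x. h x \<gamma>)"
      using ch g unfolding cube_top_def continuous_map_componentwise by blast
    then show "continuous_map X euclideanreal (\<lambda>x. h x \<gamma>)"
      by (simp add: continuous_map_in_subtopology)
  next
    fix \<gamma> x assume "\<gamma> \<in> \<Gamma>" "x \<in> topspace X"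
    then show "h x \<gamma> \<in> {0..1}" using htop by (meson PiE_mem)
  next
    fix x assume "x \<in> topspace X"
    then have "h x \<in> Sigma01_cube \<Gamma>" using hA assms(3) by auto
    then show "countable {\<gamma>\<in>\<Gamma>. h x \<gamma> \<notin> {0,1}}" unfolding Sigma01_cube_def by auto
  next
    fix x y assume x: "x \<in> topspace X" and y: "y \<in> topspace X" and ne: "x \<noteq> y"
    show "\<exists>\<gamma>\<in>\<Gamma>. h x \<gamma> \<noteq> h y \<gamma>"
    proof (rule ccontr)
      assume "\<not> ?thesis"
      then have "h x = h y" using PiE_ext[OF htop[OF x] htop[OF y]] by blast
      then show False using hin x y ne by (meson inj_onD)
    qed
  qed
qed

end
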